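(* Given any multiple-unicast network coding problem $\mathcal{I}$ with source-destination pairs $\{ (s_i, t_i), i=1,...,k \}$, the corresponding single-source single-terminal network error correction problem $\mathcal{I}_c=(\mathcal{G},s,t,\mathcal{A})$ constructed as described below, in which $\mathcal{A}$ includes sets with at most a single edge, satisfies: rate $k$ is feasible in $\mathcal{I}_c$ if and only if unit rate is feasible in $\mathcal{I}$.
   Context: A multiple-unicast network coding problem $\mathcal{I}$ is defined on a directed network $\mathcal{N}$ of noiseless point-to-point edges (edge $e$ carries $c_e$ bits per transmission), with $k$ source-destination pairs $(s_i,t_i)$; each source $s_i$ has an independent message uniform over $[2^{nR}]$ (common rate $R$ for all sources), edges apply encoding functions of their tail node's inputs, and terminal $t_i$ decodes the message of $s_i$. Rate $R$ is feasible in $\mathcal{I}$ if for every $\epsilon>0$ there is a code (of some length $n$) under which all terminals decode correctly simultaneously with probability at least $1-\epsilon$ over the uniform messages. The single-source single-terminal network error correction problem $\mathcal{I}_c=(\mathcal{G},s,t,\mathcal{A})$ is built from $\mathcal{I}$ by embedding $\mathcal{N}$ into a larger network $\mathcal{G}$ with a new source $s$ and new terminal $t$, and $k$ parallel branches: for each $i=1,\dots,k$ there are nodes $A_i$, $B_i$ and unit-capacity edges $a_i=(s,A_i)$, $x_i=(A_i,B_i)$, $y_i=(A_i,B_i)$, $z_i=(A_i,s_i)$, $z'_i=(t_i,B_i)$, $b_i=(B_i,t)$. All edges outside $\mathcal{N}$ have unit capacity. The adversary may corrupt (xor an arbitrary error signal onto) at most one edge, which may be any edge of $\mathcal{G}$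 except $a_1,\dots,a_k,b_1,\dots,b_k$; i.e., $\mathcal{A}$ consists of all singleton sets $\{e\}$ with $e\notin\{a_i,b_i: 1\le i\le k\}$. The source message $M$ of rate $R$ is uniform over $[2^{nR}]$; a code satisfies $\mathcal{I}_c$ under message $m$ if $t$ decodes $m$ correctly under every error pattern allowed by $\mathcal{A}$, and it satisfies $\mathcal{I}_c$ with error probability $\epsilon$ if the probability (over $M$) that it satisfies $\mathcal{I}_c$ is at least $1-\epsilon$. Rate $R$ is feasible in $\mathcal{I}_c$ if for every $\epsilon>0$ such a code with error probability at most $\epsilon$ exists. *)

theory Defs
  imports Complex_Main "HOL-Library.FuncSet"
begin

text \<open>A code of length n sends on edge e a symbol from the alphabet {..< asize cap n e},
  i.e. floor(n * c_e) bits.\<close>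

definition asize :: "('e \<Rightarrow> real) \<Rightarrow> nat \<Rightarrow> 'e \<Rightarrow> nat" where
  "asize cap n e = 2 ^ nat \<lfloor>real n * cap e\<rfloor>"

definition msize :: "nat \<Rightarrow> real \<Rightarrow> nat" where
  "msize n R = nat \<lceil>2 powr (real n * R)\<rceil>"

definition local_at ::
  "'e set \<Rightarrow> ('e \<Rightarrow> 'v) \<Rightarrow> nat set \<Rightarrow> (nat \<Rightarrow> 'v) \<Rightarrow> 'v
    \<Rightarrow> (('e \<Rightarrow> nat) \<Rightarrow> (nat \<Rightarrow> nat) \<Rightarrow> 'a) \<Rightarrow> bool" where
  "local_at E hde K src v \<phi> \<longleftrightarrow>
     (\<forall>X Y m m'. (\<forall>e\<in>E. hde e = v \<longrightarrow> X e = Y e) \<longrightarrow> (\<forall>j\<in>K. src j = v \<longrightarrow> m j = m' j)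
        \<longrightarrow> \<phi> X m = \<phi> Y m')"

definition is_code ::
  "'e set \<Rightarrow> ('e \<Rightarrow> 'v) \<Rightarrow> ('e \<Rightarrow> 'v) \<Rightarrow> ('e \<Rightarrow> real) \<Rightarrow> nat
    \<Rightarrow> nat set \<Rightarrow> (nat \<Rightarrow> 'v) \<Rightarrow> nat set \<Rightarrow> (nat \<Rightarrow> 'v)
    \<Rightarrow> ('e \<Rightarrow> ('e \<Rightarrow> nat) \<Rightarrow> (nat \<Rightarrow> nat) \<Rightarrow> nat)
    \<Rightarrow> (nat \<Rightarrow> ('e \<Rightarrow> nat) \<Rightarrow> (nat \<Rightarrow> nat) \<Rightarrow> nat) \<Rightarrow> bool" where
  "is_code E tle hde cap n K src D dst f g \<longleftrightarrow>
     (\<forall>e\<in>E. local_at E hde K src (tle e) (f e) \<and> (\<forall>X m. f e X m < asize cap n e)) \<and>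
     (\<forall>i\<in>D. local_at E hde K src (dst i) (g i))"

text \<open>X is the vector of edge symbols produced by code f under messages m when the error
  signal err is xor-ed onto the edges.  For an acyclic network there is exactly one such X.\<close>

definition consistent ::
  "'e set \<Rightarrow> ('e \<Rightarrow> ('e \<Rightarrow> nat) \<Rightarrow> (nat \<Rightarrow> nat) \<Rightarrow> nat) \<Rightarrow> ('e \<Rightarrow> nat)
    \<Rightarrow> ('e \<Rightarrow> nat) \<Rightarrow> (nat \<Rightarrow> nat) \<Rightarrow> bool" where
  "consistent E f err X m \<longleftrightarrow> (\<forall>e\<in>E. X e = xor (f e X m) (err e))"

definition acyclic_net :: "'e set \<Rightarrow> ('e \<Rightarrow> 'v) \<Rightarrow> ('e \<Rightarrow> 'v) \<Rightarrow> bool" where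
  "acyclic_net E tle hde \<longleftrightarrow> acyclic {(tle e, hde e) | e. e \<in> E}"

text \<open>Feasible: for every eps > 0 there is a code of some length n > 0 such that the fraction of
  message tuples (uniform on [2^{nR}]^k) for which all terminals decode correctly is at least 1-eps.\<close>

definition mu_feasible ::
  "'e set \<Rightarrow> ('e \<Rightarrow> 'v) \<Rightarrow> ('e \<Rightarrow> 'v) \<Rightarrow> ('e \<Rightarrow> real) \<Rightarrow> nat
    \<Rightarrow> (nat \<Rightarrow> 'v) \<Rightarrow> (nat \<Rightarrow> 'v) \<Rightarrow> real \<Rightarrow> bool" where
  "mu_feasible E tle hde cap k s t R \<longleftrightarrow>
     (\<forall>\<epsilon>>0. \<exists>n>0. \<exists>f g. is_code E tle hde cap n {..<k} s {..<k} t f g \<and>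
        real (card {m \<in> Pi\<^sub>E {..<k} (\<lambda>_. {..<msize n R}).
                 \<forall>X. consistent E f (\<lambda>_. 0) X m \<longrightarrow> (\<forall>i<k. g i X m = m i)})
          \<ge> (1 - \<epsilon>) * real (card (Pi\<^sub>E {..<k} (\<lambda>_. {..<msize n R}))))"

definition adm_err :: "('e \<Rightarrow> real) \<Rightarrow> nat \<Rightarrow> 'e set \<Rightarrow> ('e \<Rightarrow> nat) \<Rightarrow> bool" where
  "adm_err cap n adm err \<longleftrightarrow>
     (\<forall>e. err e \<noteq> 0 \<longrightarrow> e \<in> adm \<and> err e < asize cap n e) \<and>
     (\<forall>e e'. err e \<noteq> 0 \<longrightarrow> err e' \<noteq> 0 \<longrightarrow> e = e')"

definition ec_feasible ::
  "'e set \<Rightarrow> ('e \<Rightarrow> 'v) \<Rightarrow> ('e \<Rightarrow> 'v) \<Rightarrow> ('e \<Rightarrow> real) \<Rightarrow> 'v \<Rightarrow> 'v \<Rightarrow> 'e set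
    \<Rightarrow> real \<Rightarrow> bool" where
  "ec_feasible E tle hde cap src snk adm R \<longleftrightarrow>
     (\<forall>\<epsilon>>0. \<exists>n>0. \<exists>f g. is_code E tle hde cap n {0} (\<lambda>_. src) {0} (\<lambda>_. snk) f g \<and>
        real (card {M \<in> {..<msize n R}.
                 \<forall>err X. adm_err cap n adm err \<longrightarrow> consistent E f err X (\<lambda>_. M)
                    \<longrightarrow> g 0 X (\<lambda>_. M) = M})
          \<ge> (1 - \<epsilon>) * real (msize n R))"

datatype 'v gnode = NOld 'v | NS | NT | NA nat | NB nat
datatype 'e gedge = EOld 'e | Ea nat | Ex nat | Ey nat | Ez nat | Ez' nat | Eb nat

definition G_edges :: "'e set \<Rightarrow> nat \<Rightarrow> 'e gedge set" where
  "G_edges E k = EOld ` E \<union> (\<Union>i<k. {Ea i, Ex i, Ey i, Ez i, Ez' i, Eb i})"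

fun G_tl :: "('e \<Rightarrow> 'v) \<Rightarrow> (nat \<Rightarrow> 'v) \<Rightarrow> 'e gedge \<Rightarrow> 'v gnode" where
  "G_tl tle t (EOld e) = NOld (tle e)"
| "G_tl tle t (Ea i) = NS"
| "G_tl tle t (Ex i) = NA i"
| "G_tl tle t (Ey i) = NA i"
| "G_tl tle t (Ez i) = NA i"
| "G_tl tle t (Ez' i) = NOld (t i)"
| "G_tl tle t (Eb i) = NB i"

fun G_hd :: "('e \<Rightarrow> 'v) \<Rightarrow> (nat \<Rightarrow> 'v) \<Rightarrow> 'e gedge \<Rightarrow> 'v gnode" where
  "G_hd hde s (EOld e) = NOld (hde e)"
| "G_hd hde s (Ea i) = NA i"
| "G_hd hde s (Ex i) = NB i"
| "G_hd hde s (Ey i) = NB i"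
| "G_hd hde s (Ez i) = NOld (s i)"
| "G_hd hde s (Ez' i) = NB i"
| "G_hd hde s (Eb i) = NT"

fun G_cap :: "('e \<Rightarrow> real) \<Rightarrow> 'e gedge \<Rightarrow> real" where
  "G_cap cap (EOld e) = cap e"
| "G_cap cap _ = 1"

definition G_adm :: "'e set \<Rightarrow> nat \<Rightarrow> 'e gedge set" where
  "G_adm E k = G_edges E k - (\<Union>i<k. {Ea i, Eb i})"

end

theory Submission imports Defs begin

lemma xor_xx: "xor (a::nat) (xor a v) = v" by (rule bit_eqI) (auto simp: bit_xor_iff)
lemma xor_eq0: "xor (a::nat) b = 0 \<longleftrightarrow> a = b" by (metis xor_xx xor.right_neutral)
lemma xor_lt: "(a::nat) < 2^n \<Longrightarrow> b < 2^n \<Longrightarrow> xor a b < 2^n"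
  by (metis take_bit_nat_eq_self_iff take_bit_xor)

lemma consistent_exists:
  assumes fin: "finite E" and ac: "acyclic_net E tle hde"
    and loc: "\<forall>e\<in>E. local_at E hde K src (tle e) (f e)"
  shows "\<exists>X. consistent E f err X m"
proof -
  define r where "r = {(tle e, hde e) | e. e \<in> E}"
  define R where "R = {(e', e). e' \<in> E \<and> e \<in> E \<and> hde e' = tle e}"
  have "finite r" unfolding r_def using fin by (simp add: setcompr_eq_image)
  moreover have "acyclic r" using ac by (simp add: acyclic_net_def r_def)
  ultimately have wfr: "wf r" by (rule finite_acyclic_wf)
  have "R \<subseteq> inv_image r tle" unfolding R_def r_def inv_image_def by auto
  then have wfR: "wf R" using wf_inv_image[OF wfr] wf_subset by blast
  define F where "F = (\<lambda>X e. xor (f e X m) (err e))"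
  define X where "X = wfrec R F"
  have "\<forall>e\<in>E. X e = xor (f e X m) (err e)"
  proof
    fix e assume e: "e \<in> E"
    have "X e = F (cut X R e) e" unfolding X_def by (rule wfrec[OF wfR])
    also have "f e (cut X R e) m = f e X m"
    proof -
      have "\<forall>e'\<in>E. hde e' = tle e \<longrightarrow> cut X R e e' = X e'"
        using e by (auto simp: R_def cut_apply)
      then show ?thesis using loc e unfolding local_at_def by blast
    qed
    ultimately show "X e = xor (f e X m) (err e)" by (simp add: F_def)
  qed
  then show ?thesis unfolding consistent_def by blast
qed

lemma local_atD: "local_at E hde K src v \<phi> \<Longrightarrow> \<forall>e\<in>E. hde e = v \<longrightarrow> X e = Y e
   \<Longrightarrow> \<forall>j\<in>K. src j = v \<longrightarrow> m j = m' j \<Longrightarrow> \<phi> X m = \<phi> Y m'"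
  unfolding local_at_def by blast

definition pc :: "nat \<Rightarrow> nat \<Rightarrow> nat \<Rightarrow> nat" where
  "pc n M j = take_bit n (drop_bit (n*j) M)"

definition pv :: "nat \<Rightarrow> nat \<Rightarrow> nat \<Rightarrow> nat \<Rightarrow> nat" where
  "pv n k M = restrict (pc n M) {..<k}"

lemma pc_lt: "pc n M j < 2^n" by (simp add: pc_def)

lemma pc_inj:
  assumes "M < 2^(n*k)" "M' < 2^(n*k)" "\<forall>j<k. pc n M j = pc n M' j"
  shows "M = M'"
proof (rule bit_eqI)
  fix q
  show "bit M q = bit M' q"
  proof (cases "q < n*k")
    case True
    then have n0: "n > 0" by (cases n) auto
    define j where "j = q div n"
    define r where "r = q mod n"
    have q: "q = n*j + r" by (simp add: j_def r_def)
    have jk: "j < k" using True n0 unfolding j_def by (simp add: div_less_iff_less_mult mult.commute)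
    have rn: "r < n" using n0 by (simp add: r_def)
    have "bit (pc n M j) r = bit M q" using rn by (simp add: pc_def bit_take_bit_iff bit_drop_bit_eq q)
    moreover have "bit (pc n M' j) r = bit M' q" using rn by (simp add: pc_def bit_take_bit_iff bit_drop_bit_eq q)
    ultimately show ?thesis using assms(3) jk by simp
  next
    case False
    then have "(2::nat)^(n*k) \<le> 2^q" by simp
    then have "M < 2^q" "M' < 2^q" using assms(1,2) by linarith+
    then have "take_bit q M = M" "take_bit q M' = M'" by (simp_all add: take_bit_nat_eq_self_iff)
    then show ?thesis by (metis bit_take_bit_iff less_irrefl)
  qed
qed

lemma pv_bij: "bij_betw (pv n k) {..<2^(n*k)} (PiE {..<k} (\<lambda>_. {..<2^n}))"
proof -
  have inj: "inj_on (pv n k) {..<2^(n*k)}"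
  proof
    fix M M' assume "M \<in> {..<2^(n*k)}" "M' \<in> {..<2^(n*k)}" "pv n k M = pv n k M'"
    then show "M = M'" using pc_inj[of M n k M'] unfolding pv_def by (metis lessThan_iff restrict_apply')
  qed
  have sub: "pv n k ` {..<2^(n*k)} \<subseteq> PiE {..<k} (\<lambda>_. {..<2^n})"
    unfolding pv_def by (rule image_subsetI, rule restrict_PiE_iff[THEN iffD2]) (simp add: pc_lt)
  have "card (pv n k ` {..<2^(n*k)}) = 2^(n*k)" using inj by (simp add: card_image)
  also have "\<dots> = card (PiE {..<k} (\<lambda>_. {..<(2::nat)^n}))"
    by (simp add: card_PiE power_mult)
  finally have "pv n k ` {..<2^(n*k)} = PiE {..<k} (\<lambda>_. {..<2^n})"
    using sub by (intro card_subset_eq) (auto intro!: finite_PiE)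
  then show ?thesis using inj by (simp add: bij_betw_def)
qed

lemma msize_nat: "msize n (real k) = 2^(n*k)"
proof -
  have "(2::real) powr (real n * real k) = 2 ^ (n*k)" by (metis of_nat_mult powr_realpow zero_less_numeral)
  then show ?thesis by (simp add: msize_def)
qed

lemma asize_one: "asize (G_cap cap) n e = 2^n" if "\<forall>e'. e \<noteq> EOld e'" for e
  using that by (cases e) (auto simp: asize_def)

lemma asize_old: "asize (G_cap cap) n (EOld e) = asize cap n e" by (simp add: asize_def)

lemma localG: "local_at (G_edges E k) (G_hd hde s) {0} (\<lambda>_. NS) v \<phi> \<longleftrightarrow>
   (\<forall>X Y m m'. (\<forall>e\<in>G_edges E k. G_hd hde s e = v \<longrightarrow> X e = Y e) \<longrightarrow> (v = NS \<longrightarrow> m 0 = m' 0) \<longrightarrow> \<phi> X m = \<phi> Y m')"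
  by (auto simp: local_at_def)

lemma G_mem[simp]:
  "EOld e \<in> G_edges E k \<longleftrightarrow> e \<in> E"
  "Ea i \<in> G_edges E k \<longleftrightarrow> i < k" "Ex i \<in> G_edges E k \<longleftrightarrow> i < k"
  "Ey i \<in> G_edges E k \<longleftrightarrow> i < k" "Ez i \<in> G_edges E k \<longleftrightarrow> i < k"
  "Ez' i \<in> G_edges E k \<longleftrightarrow> i < k" "Eb i \<in> G_edges E k \<longleftrightarrow> i < k"
  by (auto simp: G_edges_def)

lemma G_adm_mem[simp]:
  "EOld e \<in> G_adm E k \<longleftrightarrow> e \<in> E"
  "Ea i \<notin> G_adm E k" "Ex i \<in> G_adm E k \<longleftrightarrow> i < k"
  "Ey i \<in> G_adm E k \<longleftrightarrow> i < k" "Ez i \<in> G_adm E k \<longleftrightarrow> i < k"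
  "Ez' i \<in> G_adm E k \<longleftrightarrow> i < k" "Eb i \<notin> G_adm E k"
  by (auto simp: G_adm_def)


definition ecF :: "nat \<Rightarrow> ('e \<Rightarrow> ('e \<Rightarrow> nat) \<Rightarrow> (nat \<Rightarrow> nat) \<Rightarrow> nat) \<Rightarrow> (nat \<Rightarrow> ('e \<Rightarrow> nat) \<Rightarrow> (nat \<Rightarrow> nat) \<Rightarrow> nat)
   \<Rightarrow> 'e gedge \<Rightarrow> ('e gedge \<Rightarrow> nat) \<Rightarrow> (nat \<Rightarrow> nat) \<Rightarrow> nat" where
  "ecF n f g e X m = (case e of
     Ea i \<Rightarrow> pc n (m 0) i
   | Ex i \<Rightarrow> take_bit n (X (Ea i))
   | Ey i \<Rightarrow> take_bit n (X (Ea i))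
   | Ez i \<Rightarrow> take_bit n (X (Ea i))
   | EOld e \<Rightarrow> f e (\<lambda>e. X (EOld e)) (\<lambda>j. X (Ez j))
   | Ez' i \<Rightarrow> take_bit n (g i (\<lambda>e. X (EOld e)) (\<lambda>j. X (Ez j)))
   | Eb i \<Rightarrow> take_bit n (if X (Ex i) = X (Ey i) then X (Ex i) else X (Ez' i)))"

definition ecG :: "nat \<Rightarrow> nat \<Rightarrow> nat \<Rightarrow> ('e gedge \<Rightarrow> nat) \<Rightarrow> (nat \<Rightarrow> nat) \<Rightarrow> nat" where
  "ecG n k i X m = (SOME M. M < 2^(n*k) \<and> (\<forall>j<k. pc n M j = X (Eb j)))"

lemma dir1_code:
  fixes E :: "'e set" and tle hde :: "'e \<Rightarrow> 'v"
  assumes code: "is_code E tle hde cap n {..<k} s {..<k} t f g"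
  shows "is_code (G_edges E k) (G_tl tle t) (G_hd hde s) (G_cap cap) n {0} (\<lambda>_. NS) {0} (\<lambda>_. NT)
           (ecF n f g) (ecG n k)"
  unfolding is_code_def
proof (intro conjI ballI)
  fix e assume e: "e \<in> G_edges E k"
  show "\<forall>X m. ecF n f g e X m < asize (G_cap cap) n e"
  proof (cases e)
    case (EOld e')
    then have "e' \<in> E" using e by simp
    then show ?thesis using code EOld by (simp add: ecF_def asize_old is_code_def)
  qed (auto simp: ecF_def asize_one pc_lt)
  show "local_at (G_edges E k) (G_hd hde s) {0} (\<lambda>_. NS) (G_tl tle t e) (ecF n f g e)"
    unfolding localG
  proof (intro allI impI)
    fix X Y :: "'e gedge \<Rightarrow> nat" and m m' :: "nat \<Rightarrow> nat"
    assume agr: "\<forall>e'\<in>G_edges E k. G_hd hde s e' = G_tl tle t e \<longrightarrow> X e' = Y e'"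
      and mm: "G_tl tle t e = NS \<longrightarrow> m 0 = m' 0"
    show "ecF n f g e X m = ecF n f g e Y m'"
    proof (cases e)
      case (EOld e')
      then have e': "e' \<in> E" using e by simp
      have l: "local_at E hde {..<k} s (tle e') (f e')" using code e' by (simp add: is_code_def)
      have "f e' (\<lambda>e. X (EOld e)) (\<lambda>j. X (Ez j)) = f e' (\<lambda>e. Y (EOld e)) (\<lambda>j. Y (Ez j))"
      proof (rule local_atD[OF l])
        show "\<forall>ea\<in>E. hde ea = tle e' \<longrightarrow> X (EOld ea) = Y (EOld ea)" using agr EOld by simp
        show "\<forall>j\<in>{..<k}. s j = tle e' \<longrightarrow> X (Ez j) = Y (Ez j)" using agr EOld by simp
      qed
      then show ?thesis using EOld by (simp add: ecF_def)
    next
      case (Ez' i)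
      then have i: "i \<in> {..<k}" using e by simp
      have l: "local_at E hde {..<k} s (t i) (g i)" using code i by (simp add: is_code_def)
      have "g i (\<lambda>e. X (EOld e)) (\<lambda>j. X (Ez j)) = g i (\<lambda>e. Y (EOld e)) (\<lambda>j. Y (Ez j))"
      proof (rule local_atD[OF l])
        show "\<forall>ea\<in>E. hde ea = t i \<longrightarrow> X (EOld ea) = Y (EOld ea)" using agr Ez' by simp
        show "\<forall>j\<in>{..<k}. s j = t i \<longrightarrow> X (Ez j) = Y (Ez j)" using agr Ez' by simp
      qed
      then show ?thesis using Ez' by (simp add: ecF_def)
    next
      case (Ea i) then show ?thesis using mm by (simp add: ecF_def)
    next
      case (Ex i) then have "X (Ea i) = Y (Ea i)" using agr e by simp
      then show ?thesis using Ex by (simp add: ecF_def)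
    next
      case (Ey i) then have "X (Ea i) = Y (Ea i)" using agr e by simp
      then show ?thesis using Ey by (simp add: ecF_def)
    next
      case (Ez i) then have "X (Ea i) = Y (Ea i)" using agr e by simp
      then show ?thesis using Ez by (simp add: ecF_def)
    next
      case (Eb i) then have "X (Ex i) = Y (Ex i)" "X (Ey i) = Y (Ey i)" "X (Ez' i) = Y (Ez' i)" using agr e by simp_all
      then show ?thesis using Eb by (simp add: ecF_def)
    qed
  qed
next
  fix i :: nat assume "i \<in> {0}"
  show "local_at (G_edges E k) (G_hd hde s) {0} (\<lambda>_. NS) NT (ecG n k i)"
    unfolding localG ecG_def
  proof (intro allI impI)
    fix X Y :: "'e gedge \<Rightarrow> nat" and m m' :: "nat \<Rightarrow> nat"
    assume "\<forall>e\<in>G_edges E k. G_hd hde s e = NT \<longrightarrow> X e = Y e"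
    then have "\<forall>j<k. X (Eb j) = Y (Eb j)" by simp
    then show "(SOME M. M < 2 ^ (n * k) \<and> (\<forall>j<k. pc n M j = X (Eb j))) =
       (SOME M. M < 2 ^ (n * k) \<and> (\<forall>j<k. pc n M j = Y (Eb j)))" by simp
  qed
qed


lemma xor_same: "xor (a::nat) b = a \<longleftrightarrow> b = 0"
  by (metis xor_xx xor.right_neutral)

lemma take_pc[simp]: "take_bit n (pc n M j) = pc n M j"
  by (simp add: take_bit_nat_eq_self_iff pc_lt)

lemma dir1_good:
  fixes E :: "'e set" and tle hde :: "'e \<Rightarrow> 'v"
  assumes code: "is_code E tle hde cap n {..<k} s {..<k} t f g"
   and M: "M < 2^(n*k)"
   and good: "\<forall>X. consistent E f (\<lambda>_. 0) X (pv n k M) \<longrightarrow> (\<forall>i<k. g i X (pv n k M) = pv n k M i)"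
   and adm: "adm_err (G_cap cap) n (G_adm E k) err"
   and cons: "consistent (G_edges E k) (ecF n f g) err X (\<lambda>_. M)"
  shows "ecG n k 0 X (\<lambda>_. M) = M"
proof -
  have nz: "err e \<noteq> 0 \<Longrightarrow> e \<in> G_adm E k" for e using adm by (simp add: adm_err_def)
  have single: "err e \<noteq> 0 \<Longrightarrow> err e' \<noteq> 0 \<Longrightarrow> e = e'" for e e' using adm by (simp add: adm_err_def)
  have cs: "e \<in> G_edges E k \<Longrightarrow> X e = xor (ecF n f g e X (\<lambda>_. M)) (err e)" for e
    using cons by (simp add: consistent_def)
  have Eb: "X (Eb j) = pc n M j" if j: "j < k" for j
  proof -
    have ea0: "err (Ea j) = 0" using nz[of "Ea j"] by auto
    have eb0: "err (Eb j) = 0" using nz[of "Eb j"] by auto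
    have xa: "X (Ea j) = pc n M j" using cs[of "Ea j"] j ea0 by (simp add: ecF_def)
    have xx: "X (Ex j) = xor (pc n M j) (err (Ex j))" using cs[of "Ex j"] j xa by (simp add: ecF_def)
    have xy: "X (Ey j) = xor (pc n M j) (err (Ey j))" using cs[of "Ey j"] j xa by (simp add: ecF_def)
    have xb: "X (Eb j) = take_bit n (if X (Ex j) = X (Ey j) then X (Ex j) else X (Ez' j))"
      using cs[of "Eb j"] j eb0 by (simp add: ecF_def)
    show ?thesis
    proof (cases "err (Ex j) = 0 \<and> err (Ey j) = 0")
      case True
      then show ?thesis using xx xy xb by simp
    next
      case False
      then obtain e0 where e0: "e0 = Ex j \<or> e0 = Ey j" "err e0 \<noteq> 0" by blast
      have oth: "e \<noteq> e0 \<Longrightarrow> err e = 0" for e using single e0(2) by blast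
      have neq: "X (Ex j) \<noteq> X (Ey j)"
        using e0 oth[of "Ex j"] oth[of "Ey j"] xx xy xor_same[of "pc n M j" "err (Ey j)"] xor_same[of "pc n M j" "err (Ex j)"] by auto
      have ez: "X (Ez i) = pc n M i" if "i < k" for i
      proof -
        have "err (Ea i) = 0" using nz[of "Ea i"] by auto
        then have "X (Ea i) = pc n M i" using cs[of "Ea i"] that by (simp add: ecF_def)
        then show ?thesis using cs[of "Ez i"] that oth[of "Ez i"] e0(1) by (auto simp: ecF_def)
      qed
      define Xn where "Xn = (\<lambda>e. X (EOld e))"
      define mz where "mz = (\<lambda>j. X (Ez j))"
      have fl: "f e Xn mz = f e Xn (pv n k M)" if "e \<in> E" for e
      proof -
        have "local_at E hde {..<k} s (tle e) (f e)" using code that by (simp add: is_code_def)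
        then show ?thesis by (rule local_atD) (auto simp: mz_def pv_def ez)
      qed
      have "consistent E f (\<lambda>_. 0) Xn (pv n k M)"
        unfolding consistent_def
      proof
        fix e assume e: "e \<in> E"
        have "X (EOld e) = f e Xn mz" using cs[of "EOld e"] e oth[of "EOld e"] e0(1)
          by (auto simp: ecF_def Xn_def mz_def)
        then show "Xn e = xor (f e Xn (pv n k M)) 0" using fl[OF e] by (simp add: Xn_def)
      qed
      then have gj: "g j Xn (pv n k M) = pc n M j" using good j by (simp add: pv_def)
      have gl: "g j Xn mz = g j Xn (pv n k M)"
      proof -
        have "local_at E hde {..<k} s (t j) (g j)" using code j by (simp add: is_code_def)
        then show ?thesis by (rule local_atD) (auto simp: mz_def pv_def ez)
      qed
      have "X (Ez' j) = take_bit n (g j Xn mz)" using cs[of "Ez' j"] j oth[of "Ez' j"] e0(1)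
        by (auto simp: ecF_def Xn_def mz_def)
      then show ?thesis using xb neq gj gl by simp
    qed
  qed
  show ?thesis unfolding ecG_def
  proof (rule some_equality)
    show "M < 2 ^ (n * k) \<and> (\<forall>j<k. pc n M j = X (Eb j))" using M Eb by simp
    fix M' assume "M' < 2 ^ (n * k) \<and> (\<forall>j<k. pc n M' j = X (Eb j))"
    then show "M' = M" using pc_inj[of M' n k M] M Eb by simp
  qed
qed


lemma dir1:
  fixes E :: "'e set" and tle hde :: "'e \<Rightarrow> 'v"
  assumes "mu_feasible E tle hde cap k s t 1"
  shows "ec_feasible (G_edges E k) (G_tl tle t) (G_hd hde s) (G_cap cap) NS NT (G_adm E k) (real k)"
  unfolding ec_feasible_def
proof (intro allI impI)
  fix \<epsilon> :: real assume "\<epsilon> > 0"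
  then obtain n f g where n: "n > 0" and code: "is_code E tle hde cap n {..<k} s {..<k} t f g"
    and card: "real (card {m \<in> Pi\<^sub>E {..<k} (\<lambda>_. {..<msize n 1}).
                 \<forall>X. consistent E f (\<lambda>_. 0) X m \<longrightarrow> (\<forall>i<k. g i X m = m i)})
          \<ge> (1 - \<epsilon>) * real (card (Pi\<^sub>E {..<k} (\<lambda>_. {..<msize n 1})))"
    using assms unfolding mu_feasible_def by blast
  have ms1: "msize n 1 = 2^n" using msize_nat[of n 1] by simp
  define P where "P = Pi\<^sub>E {..<k} (\<lambda>_. {..<(2::nat)^n})"
  define S where "S = {m \<in> P. \<forall>X. consistent E f (\<lambda>_. 0) X m \<longrightarrow> (\<forall>i<k. g i X m = m i)}"
  have cP: "card P = 2^(n*k)" by (simp add: P_def card_PiE power_mult)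
  have cS: "real (card S) \<ge> (1 - \<epsilon>) * 2^(n*k)"
    using card cP unfolding ms1 S_def P_def by simp
  define T where "T = {M \<in> {..<2^(n*k)}. pv n k M \<in> S}"
  have bij: "bij_betw (pv n k) {..<2^(n*k)} P" using pv_bij unfolding P_def .
  have "pv n k ` T = S"
  proof
    show "pv n k ` T \<subseteq> S" by (auto simp: T_def)
    show "S \<subseteq> pv n k ` T"
    proof
      fix m assume m: "m \<in> S"
      then have "m \<in> P" by (simp add: S_def)
      then obtain M where "M \<in> {..<2^(n*k)}" "m = pv n k M" using bij by (auto simp: bij_betw_def)
      then show "m \<in> pv n k ` T" using m by (auto simp: T_def)
    qed
  qed
  moreover have "inj_on (pv n k) T" using bij by (auto simp: bij_betw_def T_def intro: inj_on_subset)
  ultimately have cT: "card T = card S" by (metis card_image)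
  define Good where "Good = {M \<in> {..<msize n (real k)}.
                 \<forall>err X. adm_err (G_cap cap) n (G_adm E k) err \<longrightarrow> consistent (G_edges E k) (ecF n f g) err X (\<lambda>_. M)
                    \<longrightarrow> ecG n k 0 X (\<lambda>_. M) = M}"
  have "T \<subseteq> Good"
  proof
    fix M assume M: "M \<in> T"
    then have Ml: "M < 2^(n*k)" and Ms: "pv n k M \<in> S" by (auto simp: T_def)
    show "M \<in> Good" unfolding Good_def msize_nat
      using dir1_good[OF code Ml] Ms Ml by (auto simp: S_def)
  qed
  then have "card T \<le> card Good" by (intro card_mono) (auto simp: Good_def)
  then have "real (card Good) \<ge> (1 - \<epsilon>) * real (msize n (real k))"
    using cS cT msize_nat[of n k] by simp
  then show "\<exists>n>0. \<exists>f g. is_code (G_edges E k) (G_tl tle t) (G_hd hde s) (G_cap cap) n {0} (\<lambda>_. NS) {0} (\<lambda>_. NT) f g \<and>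
        real (card {M \<in> {..<msize n (real k)}.
                 \<forall>err X. adm_err (G_cap cap) n (G_adm E k) err \<longrightarrow> consistent (G_edges E k) f err X (\<lambda>_. M)
                    \<longrightarrow> g 0 X (\<lambda>_. M) = M})
          \<ge> (1 - \<epsilon>) * real (msize n (real k))"
    using n dir1_code[OF code] unfolding Good_def by blast
qed


lemma inc_NS: "G_hd hde s e \<noteq> NS" by (cases e) auto
lemma inc_NA: "e \<in> G_edges E k \<Longrightarrow> G_hd hde s e = NA j \<Longrightarrow> e = Ea j" by (cases e) auto
lemma inc_NB: "e \<in> G_edges E k \<Longrightarrow> G_hd hde s e = NB j \<Longrightarrow> e = Ex j \<or> e = Ey j \<or> e = Ez' j"
  by (cases e) auto
lemma inc_NT: "e \<in> G_edges E k \<Longrightarrow> G_hd hde s e = NT \<Longrightarrow> \<exists>i<k. e = Eb i" by (cases e) auto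
lemma inc_NOld: "e \<in> G_edges E k \<Longrightarrow> G_hd hde s e = NOld v \<Longrightarrow>
   (\<exists>e'\<in>E. e = EOld e' \<and> hde e' = v) \<or> (\<exists>j<k. e = Ez j \<and> s j = v)" by (cases e) auto

lemma locG:
  fixes E :: "'e set"
  assumes "local_at (G_edges E k) (G_hd hde s) {0} (\<lambda>_. NS) v \<phi>" "v \<noteq> NS"
    "\<And>e. e \<in> G_edges E k \<Longrightarrow> G_hd hde s e = v \<Longrightarrow> X e = Y e"
  shows "\<phi> X m = \<phi> Y m'"
  using assms unfolding localG by blast

lemma locG_NS:
  fixes E :: "'e set"
  assumes "local_at (G_edges E k) (G_hd hde s) {0} (\<lambda>_. NS) NS \<phi>"
  shows "\<phi> X m = \<phi> Y m"
  using assms inc_NS unfolding localG by metis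

definition "aa F j M = F (Ea j) (\<lambda>_. 0) (\<lambda>_::nat. M)"
definition "xi F j a = F (Ex j) ((\<lambda>_. 0)(Ea j := a)) (\<lambda>_::nat. 0::nat)"
definition "eta F j a = F (Ey j) ((\<lambda>_. 0)(Ea j := a)) (\<lambda>_::nat. 0::nat)"
definition "zeta F j a = F (Ez j) ((\<lambda>_. 0)(Ea j := a)) (\<lambda>_::nat. 0::nat)"
definition "lift F X m = (\<lambda>e. case e of EOld e \<Rightarrow> X e | Ez j \<Rightarrow> zeta F j (m j) | _ \<Rightarrow> 0)"
definition "fN F e X m = F (EOld e) (lift F X m) (\<lambda>_::nat. 0::nat)"
definition "hh F i X m = F (Ez' i) (lift F X m) (\<lambda>_::nat. 0::nat)"
definition "psi F j x y z = F (Eb j) ((\<lambda>_. 0)(Ex j := x, Ey j := y, Ez' j := z)) (\<lambda>_::nat. 0::nat)"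
definition "Dd Gd bv = Gd (0::nat) (\<lambda>e. case e of Eb i \<Rightarrow> bv i | _ \<Rightarrow> 0) (\<lambda>_::nat. 0::nat)"
definition "uu F k M = restrict (\<lambda>j. aa F j M) {..<k}"
definition "bvec F k u X err = restrict (\<lambda>j. psi F j (xor (xi F j (u j)) (err (Ex j)))
   (xor (eta F j (u j)) (err (Ey j))) (xor (hh F j X u) (err (Ez' j)))) {..<k}"
definition "GX F k M X err = (\<lambda>e. case e of
  Ea j \<Rightarrow> aa F j M
| Ex j \<Rightarrow> xor (xi F j (aa F j M)) (err (Ex j))
| Ey j \<Rightarrow> xor (eta F j (aa F j M)) (err (Ey j))
| Ez j \<Rightarrow> zeta F j (aa F j M)
| EOld e \<Rightarrow> X e
| Ez' j \<Rightarrow> xor (hh F j X (uu F k M)) (err (Ez' j))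
| Eb j \<Rightarrow> psi F j (xor (xi F j (aa F j M)) (err (Ex j))) (xor (eta F j (aa F j M)) (err (Ey j)))
            (xor (hh F j X (uu F k M)) (err (Ez' j))))"

lemma GX_cons:
  fixes E :: "'e set" and tle hde :: "'e \<Rightarrow> 'v"
  assumes code: "is_code (G_edges E k) (G_tl tle t) (G_hd hde s) (G_cap cap) n {0} (\<lambda>_. NS) {0} (\<lambda>_. NT) F Gd"
    and X: "consistent E (fN F) (\<lambda>_. 0) X (uu F k M)"
    and err: "\<And>e. err e \<noteq> 0 \<Longrightarrow> \<exists>j<k. e = Ex j \<or> e = Ey j \<or> e = Ez' j"
  shows "consistent (G_edges E k) F err (GX F k M X err) (\<lambda>_. M)"
    and "Gd 0 (GX F k M X err) (\<lambda>_. M) = Dd Gd (bvec F k (uu F k M) X err)"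
proof -
  let ?X = "GX F k M X err"
  have loc: "e \<in> G_edges E k \<Longrightarrow> local_at (G_edges E k) (G_hd hde s) {0} (\<lambda>_. NS) (G_tl tle t e) (F e)" for e
    using code by (simp add: is_code_def)
  have e0: "err (Ea j) = 0" "err (Ez j) = 0" "err (EOld e) = 0" "err (Eb j) = 0" for j e
    using err by fastforce+
  have liftok: "?X e' = lift F X (uu F k M) e'" if "e' \<in> G_edges E k" "G_hd hde s e' = NOld v" for e' v
    using inc_NOld[OF that] by (auto simp: GX_def lift_def uu_def)
  show "consistent (G_edges E k) F err ?X (\<lambda>_. M)"
    unfolding consistent_def
  proof
    fix e assume e: "e \<in> G_edges E k"
    show "?X e = xor (F e ?X (\<lambda>_. M)) (err e)"
    proof (cases e)
      case (Ea j)
      have "local_at (G_edges E k) (G_hd hde s) {0} (\<lambda>_. NS) NS (F e)" using loc[OF e] Ea by simp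
      then have "F e ?X (\<lambda>_. M) = F e (\<lambda>_. 0) (\<lambda>_. M)" by (rule locG_NS)
      then show ?thesis using Ea e0 by (simp add: GX_def aa_def)
    next
      case (Ex j)
      have "F e ?X (\<lambda>_. M) = F e ((\<lambda>_. 0)(Ea j := aa F j M)) (\<lambda>_. 0)"
        by (rule locG[OF loc[OF e]]) (use Ex in \<open>auto simp: GX_def dest!: inc_NA\<close>)
      then show ?thesis using Ex by (simp add: GX_def xi_def)
    next
      case (Ey j)
      have "F e ?X (\<lambda>_. M) = F e ((\<lambda>_. 0)(Ea j := aa F j M)) (\<lambda>_. 0)"
        by (rule locG[OF loc[OF e]]) (use Ey in \<open>auto simp: GX_def dest!: inc_NA\<close>)
      then show ?thesis using Ey by (simp add: GX_def eta_def)
    next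
      case (Ez j)
      have "F e ?X (\<lambda>_. M) = F e ((\<lambda>_. 0)(Ea j := aa F j M)) (\<lambda>_. 0)"
        by (rule locG[OF loc[OF e]]) (use Ez in \<open>auto simp: GX_def dest!: inc_NA\<close>)
      then show ?thesis using Ez e0 by (simp add: GX_def zeta_def)
    next
      case (EOld e')
      have "F e ?X (\<lambda>_. M) = F e (lift F X (uu F k M)) (\<lambda>_. 0)"
        by (rule locG[OF loc[OF e]]) (use EOld liftok in auto)
      moreover have "e' \<in> E" using e EOld by simp
      ultimately show ?thesis using EOld e0 X by (simp add: GX_def fN_def consistent_def)
    next
      case (Ez' j)
      have "F e ?X (\<lambda>_. M) = F e (lift F X (uu F k M)) (\<lambda>_. 0)"
        by (rule locG[OF loc[OF e]]) (use Ez' liftok in auto)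
      then show ?thesis using Ez' by (simp add: GX_def hh_def)
    next
      case (Eb j)
      have "F e ?X (\<lambda>_. M) = F e ((\<lambda>_. 0)(Ex j := ?X (Ex j), Ey j := ?X (Ey j), Ez' j := ?X (Ez' j))) (\<lambda>_. 0)"
        by (rule locG[OF loc[OF e]]) (use Eb in \<open>auto dest!: inc_NB\<close>)
      then show ?thesis using Eb e0 by (simp add: GX_def psi_def)
    qed
  qed
  have "local_at (G_edges E k) (G_hd hde s) {0} (\<lambda>_. NS) NT (Gd 0)" using code by (simp add: is_code_def)
  then show "Gd 0 ?X (\<lambda>_. M) = Dd Gd (bvec F k (uu F k M) X err)"
    unfolding Dd_def
    by (rule locG) (auto simp: GX_def bvec_def uu_def dest!: inc_NT)
qed


lemma codeE:
  assumes "is_code EE tl0 hd0 cp n K src D dst F Gd" "e \<in> EE"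
  shows "local_at EE hd0 K src (tl0 e) (F e)" "F e X m < asize cp n e"
  using assms by (auto simp: is_code_def)

lemma fN_local:
  fixes E :: "'e set" and tle hde :: "'e \<Rightarrow> 'v"
  assumes code: "is_code (G_edges E k) (G_tl tle t) (G_hd hde s) (G_cap cap) n {0} (\<lambda>_. NS) {0} (\<lambda>_. NT) F Gd"
    and e: "e \<in> E"
  shows "local_at E hde {..<k} s (tle e) (fN F e)" and "fN F e X m < asize cap n e"
proof -
  have l: "local_at (G_edges E k) (G_hd hde s) {0} (\<lambda>_. NS) (NOld (tle e)) (F (EOld e))"
    using codeE(1)[OF code, of "EOld e"] e by simp
  show "local_at E hde {..<k} s (tle e) (fN F e)"
    unfolding local_at_def fN_def
  proof (intro allI impI)
    fix X Y :: "'e \<Rightarrow> nat" and m m' :: "nat \<Rightarrow> nat"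
    assume a: "\<forall>e'\<in>E. hde e' = tle e \<longrightarrow> X e' = Y e'" "\<forall>j\<in>{..<k}. s j = tle e \<longrightarrow> m j = m' j"
    show "F (EOld e) (lift F X m) (\<lambda>_. 0) = F (EOld e) (lift F Y m') (\<lambda>_. 0)"
      by (rule locG[OF l]) (use a in \<open>auto simp: lift_def dest!: inc_NOld\<close>)
  qed
  show "fN F e X m < asize cap n e" using codeE(2)[OF code, of "EOld e"] e by (simp add: fN_def asize_old)
qed

lemma hh_local:
  fixes E :: "'e set" and tle hde :: "'e \<Rightarrow> 'v"
  assumes code: "is_code (G_edges E k) (G_tl tle t) (G_hd hde s) (G_cap cap) n {0} (\<lambda>_. NS) {0} (\<lambda>_. NT) F Gd"
    and i: "i < k"
  shows "local_at E hde {..<k} s (t i) (hh F i)" and "hh F i X m < 2^n"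
proof -
  have l: "local_at (G_edges E k) (G_hd hde s) {0} (\<lambda>_. NS) (NOld (t i)) (F (Ez' i))"
    using codeE(1)[OF code, of "Ez' i"] i by simp
  show "local_at E hde {..<k} s (t i) (hh F i)"
    unfolding local_at_def hh_def
  proof (intro allI impI)
    fix X Y :: "'e \<Rightarrow> nat" and m m' :: "nat \<Rightarrow> nat"
    assume a: "\<forall>e'\<in>E. hde e' = t i \<longrightarrow> X e' = Y e'" "\<forall>j\<in>{..<k}. s j = t i \<longrightarrow> m j = m' j"
    show "F (Ez' i) (lift F X m) (\<lambda>_. 0) = F (Ez' i) (lift F Y m') (\<lambda>_. 0)"
      by (rule locG[OF l]) (use a in \<open>auto simp: lift_def dest!: inc_NOld\<close>)
  qed
  have "F (Ez' i) (lift F X m) (\<lambda>_. 0) < asize (G_cap cap) n (Ez' i)"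
    using code i by (simp add: is_code_def)
  then show "hh F i X m < 2^n" by (simp add: hh_def asize_one)
qed

lemma bounds2:
  fixes E :: "'e set" and tle hde :: "'e \<Rightarrow> 'v"
  assumes code: "is_code (G_edges E k) (G_tl tle t) (G_hd hde s) (G_cap cap) n {0} (\<lambda>_. NS) {0} (\<lambda>_. NT) F Gd"
    and i: "i < k"
  shows "aa F i M < 2^n" "xi F i a < 2^n" "eta F i a < 2^n" "psi F i x y z < 2^n"
  using codeE(2)[OF code, of "Ea i"] codeE(2)[OF code, of "Ex i"] codeE(2)[OF code, of "Ey i"]
    codeE(2)[OF code, of "Eb i"] i by (auto simp: aa_def xi_def eta_def psi_def asize_one)


lemma bvec_PiE:
  fixes E :: "'e set" and tle hde :: "'e \<Rightarrow> 'v"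
  assumes code: "is_code (G_edges E k) (G_tl tle t) (G_hd hde s) (G_cap cap) n {0} (\<lambda>_. NS) {0} (\<lambda>_. NT) F Gd"
  shows "bvec F k u X err \<in> PiE {..<k} (\<lambda>_. {..<2^n})"
  unfolding bvec_def by (rule restrict_PiE_iff[THEN iffD2]) (use bounds2(4)[OF code] in auto)

lemma dir2_core:
  fixes E :: "'e set" and tle hde :: "'e \<Rightarrow> 'v"
  assumes fin: "finite E" and ac: "acyclic_net E tle hde"
    and code: "is_code (G_edges E k) (G_tl tle t) (G_hd hde s) (G_cap cap) n {0} (\<lambda>_. NS) {0} (\<lambda>_. NT) F Gd"
  defines "Good \<equiv> {M \<in> {..<msize n (real k)}.
                 \<forall>err X. adm_err (G_cap cap) n (G_adm E k) err \<longrightarrow> consistent (G_edges E k) F err X (\<lambda>_. M)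
                    \<longrightarrow> Gd 0 X (\<lambda>_. M) = M}"
  shows "\<exists>f g. is_code E tle hde cap n {..<k} s {..<k} t f g \<and>
        real (card {m \<in> Pi\<^sub>E {..<k} (\<lambda>_. {..<msize n 1}).
                 \<forall>X. consistent E f (\<lambda>_. 0) X m \<longrightarrow> (\<forall>i<k. g i X m = m i)})
          \<ge> 4 * real (card Good) - 3 * 2^(n*k)"
proof -
  define P where "P = Pi\<^sub>E {..<k} (\<lambda>_. {..<(2::nat)^n})"
  have cP: "card P = 2^(n*k)" by (simp add: P_def card_PiE power_mult)
  have ms1: "msize n 1 = 2^n" using msize_nat[of n 1] by simp
  have finP: "finite P" by (simp add: P_def finite_PiE)
  define errs where "errs = {err. adm_err (G_cap cap) n (G_adm E k) err \<and>
      (\<forall>e. err e \<noteq> 0 \<longrightarrow> (\<exists>j<k. e = Ex j \<or> e = Ey j \<or> e = Ez' j))}"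
  define CC where "CC M = {bvec F k (uu F k M) X err | X err.
      consistent E (fN F) (\<lambda>_. 0) X (uu F k M) \<and> err \<in> errs}" for M
  define XN where "XN u = (SOME X. consistent E (fN F) (\<lambda>_. 0) X u)" for u
  define b0 where "b0 M = bvec F k (uu F k M) (XN (uu F k M)) (\<lambda>_::'e gedge. 0::nat)" for M
  define Rig where "Rig = {M \<in> Good. CC M \<subseteq> {b0 M}}"
  define NR where "NR = Good - Rig"
  have XN: "consistent E (fN F) (\<lambda>_. 0) (XN u) u" for u
  proof -
    have "\<exists>X. consistent E (fN F) (\<lambda>_. 0) X u"
      by (rule consistent_exists[OF fin ac]) (use fN_local(1)[OF code] in blast)
    then show ?thesis unfolding XN_def by (rule someI_ex)
  qed
  have F1: "Dd Gd c = M" if MG: "M \<in> Good" and cC: "c \<in> CC M" for M c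
  proof -
    obtain X err where c: "c = bvec F k (uu F k M) X err" and X: "consistent E (fN F) (\<lambda>_. 0) X (uu F k M)"
      and err: "err \<in> errs" using cC unfolding CC_def by blast
    have e1: "\<And>e. err e \<noteq> 0 \<Longrightarrow> \<exists>j<k. e = Ex j \<or> e = Ey j \<or> e = Ez' j" using err by (simp add: errs_def)
    have "adm_err (G_cap cap) n (G_adm E k) err" using err by (simp add: errs_def)
    then have "Gd 0 (GX F k M X err) (\<lambda>_. M) = M"
      using MG GX_cons(1)[OF code X e1] unfolding Good_def by blast
    then show ?thesis using GX_cons(2)[OF code X e1] c by simp
  qed
  have zero_errs: "(\<lambda>_. 0) \<in> errs" by (simp add: errs_def adm_err_def)
  have F2: "b0 M \<in> CC M" for M unfolding b0_def CC_def using XN[of "uu F k M"] zero_errs by blast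
  have F3: "CC M \<subseteq> P" for M unfolding CC_def P_def using bvec_PiE[OF code] by blast
  have finG: "finite Good" by (simp add: Good_def)
  have RG: "Rig \<subseteq> Good" by (simp add: Rig_def)
  have count1: "real (card Rig) \<ge> 2 * real (card Good) - 2^(n*k)"
  proof -
    define cM where "cM M = (SOME c. c \<in> CC M \<and> c \<noteq> b0 M)" for M
    have cM: "cM M \<in> CC M \<and> cM M \<noteq> b0 M" if "M \<in> NR" for M
    proof -
      have "\<exists>c. c \<in> CC M \<and> c \<noteq> b0 M" using that by (auto simp: NR_def Rig_def)
      then show ?thesis unfolding cM_def by (rule someI_ex)
    qed
    have NRG: "NR \<subseteq> Good" by (simp add: NR_def)
    have inj1: "inj_on b0 Good" by (rule inj_onI) (metis F1 F2)
    have inj2: "inj_on cM NR" by (rule inj_onI) (metis F1 cM NRG subsetD)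
    have disj: "b0 ` Good \<inter> cM ` NR = {}"
    proof (rule ccontr)
      assume "b0 ` Good \<inter> cM ` NR \<noteq> {}"
      then obtain M M' where M: "M \<in> Good" "M' \<in> NR" "b0 M = cM M'" by blast
      then have "M = M'" by (metis F1 F2 cM NRG subsetD)
      then show False using M cM by metis
    qed
    have sub: "b0 ` Good \<union> cM ` NR \<subseteq> P" using F2 F3 cM NRG by blast
    have finNR: "finite NR" using finG NRG finite_subset by blast
    have c1: "card (b0 ` Good \<union> cM ` NR) = card Good + card NR"
      using card_Un_disjoint[OF _ _ disj] finG finNR card_image[OF inj1] card_image[OF inj2] by simp
    have c2: "card (b0 ` Good \<union> cM ` NR) \<le> card P" using sub finP by (rule card_mono[rotated])
    from c1 c2 have "card Good + card NR \<le> 2^(n*k)" using cP by simp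
    moreover have "card NR = card Good - card Rig" unfolding NR_def by (rule card_Diff_subset[OF finite_subset[OF RG finG] RG])
    moreover have "card Rig \<le> card Good" using RG finG by (rule card_mono[rotated])
    ultimately have "2 * card Good \<le> 2^(n*k) + card Rig" by linarith
    then have "real (2 * card Good) \<le> real (2^(n*k) + card Rig)" by (simp only: of_nat_le_iff)
    then show ?thesis by simp
  qed
  define \<beta> where "\<beta> i a = psi F i (xi F i a) (eta F i a) 0" for i a
  have errs1: "(\<lambda>_::'e gedge. 0::nat)(e0 := v) \<in> errs" if "e0 \<in> {Ex i, Ey i, Ez' i}" "i < k" "v < 2^n" for e0 i v
    using that by (auto simp: errs_def adm_err_def asize_one)
  have F5: "b0 M i = \<beta> i (aa F i M)" if MR: "M \<in> Rig" and ik: "i < k" for M i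
  proof -
    define u where "u = uu F k M"
    define h where "h = hh F i (XN u) u"
    have "h < 2^n" unfolding h_def by (rule hh_local(2)[OF code ik])
    then have "bvec F k u (XN u) ((\<lambda>_::'e gedge. 0::nat)(Ez' i := h)) \<in> CC M"
      unfolding CC_def u_def using XN errs1[of "Ez' i" i h] ik by blast
    then have "bvec F k u (XN u) ((\<lambda>_::'e gedge. 0::nat)(Ez' i := h)) = b0 M"
      using MR by (auto simp: Rig_def)
    then have "b0 M i = bvec F k u (XN u) ((\<lambda>_::'e gedge. 0::nat)(Ez' i := h)) i" by simp
    also have "\<dots> = \<beta> i (u i)" using ik by (simp add: bvec_def \<beta>_def h_def)
    finally show ?thesis using ik by (simp add: u_def uu_def)
  qed
  define \<gamma> where "\<gamma> i b = (LEAST a. a < 2^n \<and> \<beta> i a = b)" for i b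
  define Qi where "Qi i = {a \<in> {..<2^n}. \<gamma> i (\<beta> i a) = a}" for i
  define Q where "Q = PiE {..<k} Qi"
  define U where "U = uu F k ` Rig"
  define BI where "BI i = \<beta> i ` {..<2^n}" for i
  have b0R: "b0 M = restrict (\<lambda>i. \<beta> i (aa F i M)) {..<k}" if "M \<in> Rig" for M
  proof
    fix i show "b0 M i = restrict (\<lambda>i. \<beta> i (aa F i M)) {..<k} i"
      using F5[OF that, of i] by (cases "i < k") (auto simp: b0_def bvec_def)
  qed
  have inj0: "inj_on b0 Rig" by (rule inj_onI) (metis F1 F2 RG subsetD)
  have "b0 ` Rig \<subseteq> PiE {..<k} BI"
  proof
    fix c assume "c \<in> b0 ` Rig"
    then obtain M where M: "M \<in> Rig" "c = b0 M" by blast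
    show "c \<in> PiE {..<k} BI" unfolding M(2) b0R[OF M(1)]
      by (rule restrict_PiE_iff[THEN iffD2]) (auto simp: BI_def intro!: imageI bounds2(1)[OF code])
  qed
  then have cR: "card Rig \<le> card (PiE {..<k} BI)"
    using card_image[OF inj0] card_mono[of "PiE {..<k} BI"] by (metis finite_PiE finite_imageI finite_lessThan BI_def)
  have \<gamma>: "\<gamma> i b < 2^n \<and> \<beta> i (\<gamma> i b) = b" if "b \<in> BI i" for i b
  proof -
    have "\<exists>a. a < 2^n \<and> \<beta> i a = b" using that by (auto simp: BI_def)
    then show ?thesis unfolding \<gamma>_def by (rule LeastI_ex)
  qed
  have bijQ: "bij_betw (\<beta> i) (Qi i) (BI i)" for i
  proof -
    have "inj_on (\<beta> i) (Qi i)" by (rule inj_onI) (metis (mono_tags, lifting) Qi_def mem_Collect_eq)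
    moreover have "\<beta> i ` Qi i = BI i"
    proof
      show "\<beta> i ` Qi i \<subseteq> BI i" by (auto simp: Qi_def BI_def)
      show "BI i \<subseteq> \<beta> i ` Qi i"
      proof
        fix b assume b: "b \<in> BI i"
        then have "\<gamma> i b \<in> Qi i" using \<gamma>[OF b] by (auto simp: Qi_def)
        then show "b \<in> \<beta> i ` Qi i" using \<gamma>[OF b] by (metis imageI)
      qed
    qed
    ultimately show ?thesis by (simp add: bij_betw_def)
  qed
  have cQ: "card Q = card (PiE {..<k} BI)"
    unfolding Q_def by (simp add: card_PiE bij_betw_same_card[OF bijQ])
  have injU: "inj_on (uu F k) Rig"
  proof (rule inj_onI)
    fix M M' assume "M \<in> Rig" "M' \<in> Rig" "uu F k M = uu F k M'"
    then show "M = M'" by (metis F1 F2 RG subsetD b0_def)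
  qed
  have cU: "card U = card Rig" unfolding U_def by (rule card_image[OF injU])
  have UP: "U \<subseteq> P" unfolding U_def P_def uu_def
    by (auto intro!: restrict_PiE_iff[THEN iffD2] bounds2(1)[OF code])
  have QP: "Q \<subseteq> P" unfolding Q_def P_def by (rule PiE_mono) (auto simp: Qi_def)
  have "card (U \<union> Q) \<le> card P" using UP QP finP by (intro card_mono) auto
  moreover have "card (U \<union> Q) + card (U \<inter> Q) = card U + card Q"
    using card_Un_Int[of U Q] finite_subset[OF UP finP] finite_subset[OF QP finP] by simp
  ultimately have "2 * card Rig \<le> card (U \<inter> Q) + 2^(n*k)" using cP cQ cR cU by linarith
  then have count2: "real (card (U \<inter> Q)) \<ge> 2 * real (card Rig) - 2^(n*k)"
    by (metis (mono_tags, opaque_lifting) add.commute diff_le_eq of_nat_add of_nat_le_iff of_nat_mult of_nat_numeral of_nat_power)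
  define gN where "gN i X m = \<gamma> i (\<beta> i (aa F i (SOME M'. M' \<in> Rig \<and> (\<exists>X'. consistent E (fN F) (\<lambda>_. 0) X' (uu F k M')
       \<and> hh F i X' (uu F k M') = hh F i X m))))" for i X m
  have mucode: "is_code E tle hde cap n {..<k} s {..<k} t (fN F) gN"
    unfolding is_code_def
  proof (intro conjI ballI allI)
    fix e X m assume "e \<in> E"
    then show "local_at E hde {..<k} s (tle e) (fN F e)" "fN F e X m < asize cap n e"
      using fN_local[OF code] by blast+
  next
    fix i assume i: "i \<in> {..<k}"
    show "local_at E hde {..<k} s (t i) (gN i)"
      unfolding local_at_def
    proof (intro allI impI)
      fix X Y :: "'e \<Rightarrow> nat" and m m' :: "nat \<Rightarrow> nat"
      assume a: "\<forall>e\<in>E. hde e = t i \<longrightarrow> X e = Y e" "\<forall>j\<in>{..<k}. s j = t i \<longrightarrow> m j = m' j"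
      have l: "local_at E hde {..<k} s (t i) (hh F i)" using hh_local(1)[OF code, of i] i by simp
      have "hh F i X m = hh F i Y m'" by (rule local_atD[OF l]) (use a in auto)
      then show "gN i X m = gN i Y m'" by (simp add: gN_def)
    qed
  qed
  have F8: "U \<inter> Q \<subseteq> {m \<in> Pi\<^sub>E {..<k} (\<lambda>_. {..<msize n 1}).
                 \<forall>X. consistent E (fN F) (\<lambda>_. 0) X m \<longrightarrow> (\<forall>i<k. gN i X m = m i)}"
  proof
    fix m assume mUQ: "m \<in> U \<inter> Q"
    then obtain M where MR: "M \<in> Rig" and mM: "m = uu F k M" by (auto simp: U_def)
    have mP: "m \<in> Pi\<^sub>E {..<k} (\<lambda>_. {..<msize n 1})" using mUQ UP ms1 P_def by auto
    have "\<forall>X. consistent E (fN F) (\<lambda>_. 0) X m \<longrightarrow> (\<forall>i<k. gN i X m = m i)"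
    proof (intro allI impI)
      fix X i assume X: "consistent E (fN F) (\<lambda>_. 0) X m" and ik: "i < k"
      define h where "h = hh F i X m"
      define M' where "M' = (SOME M'. M' \<in> Rig \<and> (\<exists>X'. consistent E (fN F) (\<lambda>_. 0) X' (uu F k M')
         \<and> hh F i X' (uu F k M') = h))"
      have "\<exists>M'. M' \<in> Rig \<and> (\<exists>X'. consistent E (fN F) (\<lambda>_. 0) X' (uu F k M')
         \<and> hh F i X' (uu F k M') = h)" using MR X mM h_def by blast
      then have "M' \<in> Rig \<and> (\<exists>X'. consistent E (fN F) (\<lambda>_. 0) X' (uu F k M')
         \<and> hh F i X' (uu F k M') = h)" unfolding M'_def by (rule someI_ex)
      then obtain X' where M'R: "M' \<in> Rig" and X': "consistent E (fN F) (\<lambda>_. 0) X' (uu F k M')"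
        and h': "hh F i X' (uu F k M') = h" by blast
      define a where "a = aa F i M"
      define a' where "a' = aa F i M'"
      have mi: "m i = a" using ik by (simp add: mM uu_def a_def)
      have mi': "uu F k M' i = a'" using ik by (simp add: uu_def a'_def)
      have c1: "psi F i (xi F i a') (eta F i a) h = \<beta> i a"
      proof -
        define err where "err = (\<lambda>_::'e gedge. 0::nat)(Ex i := xor (xi F i a) (xi F i a'))"
        have "err \<in> errs" unfolding err_def
          by (rule errs1) (use ik in \<open>auto intro!: xor_lt bounds2(2)[OF code]\<close>)
        then have "bvec F k m X err \<in> CC M" using X unfolding CC_def mM by blast
        then have "bvec F k m X err = b0 M" using MR by (auto simp: Rig_def)
        then have "bvec F k m X err i = \<beta> i a" using F5[OF MR ik] a_def by simp
        then show ?thesis using ik mi by (simp add: bvec_def err_def xor_xx h_def)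
      qed
      have c2: "psi F i (xi F i a') (eta F i a) h = \<beta> i a'"
      proof -
        define err where "err = (\<lambda>_::'e gedge. 0::nat)(Ey i := xor (eta F i a') (eta F i a))"
        have "err \<in> errs" unfolding err_def
          by (rule errs1) (use ik in \<open>auto intro!: xor_lt bounds2(3)[OF code]\<close>)
        then have "bvec F k (uu F k M') X' err \<in> CC M'" using X' unfolding CC_def by blast
        then have "bvec F k (uu F k M') X' err = b0 M'" using M'R by (auto simp: Rig_def)
        then have "bvec F k (uu F k M') X' err i = \<beta> i a'" using F5[OF M'R ik] a'_def by simp
        then show ?thesis using ik mi' h' by (simp add: bvec_def err_def xor_xx)
      qed
      have "m \<in> Q" using mUQ by simp
      then have "a \<in> Qi i" using ik mi by (auto simp: Q_def)
      then have "\<gamma> i (\<beta> i a) = a" by (simp add: Qi_def)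
      then show "gN i X m = m i" using c1 c2 mi by (simp add: gN_def M'_def[symmetric] h_def[symmetric] a'_def[symmetric])
    qed
    then show "m \<in> {m \<in> Pi\<^sub>E {..<k} (\<lambda>_. {..<msize n 1}).
                 \<forall>X. consistent E (fN F) (\<lambda>_. 0) X m \<longrightarrow> (\<forall>i<k. gN i X m = m i)}" using mP by blast
  qed
  have "card (U \<inter> Q) \<le> card {m \<in> Pi\<^sub>E {..<k} (\<lambda>_. {..<msize n 1}).
                 \<forall>X. consistent E (fN F) (\<lambda>_. 0) X m \<longrightarrow> (\<forall>i<k. gN i X m = m i)}"
    by (rule card_mono[OF _ F8]) (simp add: finite_PiE)
  then show ?thesis using mucode count1 count2 by force
qed


lemma dir2:
  fixes E :: "'e set" and tle hde :: "'e \<Rightarrow> 'v"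
  assumes fin: "finite E" and ac: "acyclic_net E tle hde"
    and ec: "ec_feasible (G_edges E k) (G_tl tle t) (G_hd hde s) (G_cap cap) NS NT (G_adm E k) (real k)"
  shows "mu_feasible E tle hde cap k s t 1"
  unfolding mu_feasible_def
proof (intro allI impI)
  fix \<epsilon> :: real assume ep: "\<epsilon> > 0"
  then have "\<epsilon> / 4 > 0" by simp
  then obtain n F Gd where n: "n > 0"
    and code: "is_code (G_edges E k) (G_tl tle t) (G_hd hde s) (G_cap cap) n {0} (\<lambda>_. NS) {0} (\<lambda>_. NT) F Gd"
    and card: "real (card {M \<in> {..<msize n (real k)}.
                 \<forall>err X. adm_err (G_cap cap) n (G_adm E k) err \<longrightarrow> consistent (G_edges E k) F err X (\<lambda>_. M)
                    \<longrightarrow> Gd 0 X (\<lambda>_. M) = M})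
          \<ge> (1 - \<epsilon>/4) * real (msize n (real k))"
    using ec unfolding ec_feasible_def by blast
  obtain f g where fg: "is_code E tle hde cap n {..<k} s {..<k} t f g"
    and c2: "real (card {m \<in> Pi\<^sub>E {..<k} (\<lambda>_. {..<msize n 1}).
                 \<forall>X. consistent E f (\<lambda>_. 0) X m \<longrightarrow> (\<forall>i<k. g i X m = m i)})
          \<ge> 4 * real (card {M \<in> {..<msize n (real k)}.
                 \<forall>err X. adm_err (G_cap cap) n (G_adm E k) err \<longrightarrow> consistent (G_edges E k) F err X (\<lambda>_. M)
                    \<longrightarrow> Gd 0 X (\<lambda>_. M) = M}) - 3 * 2^(n*k)"
    using dir2_core[OF fin ac code] by blast
  have ms1: "msize n 1 = 2^n" using msize_nat[of n 1] by simp
  have cP: "card (Pi\<^sub>E {..<k} (\<lambda>_. {..<msize n 1})) = 2^(n*k)" by (simp add: ms1 card_PiE power_mult)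
  have "real (card {m \<in> Pi\<^sub>E {..<k} (\<lambda>_. {..<msize n 1}).
                 \<forall>X. consistent E f (\<lambda>_. 0) X m \<longrightarrow> (\<forall>i<k. g i X m = m i)})
          \<ge> (1 - \<epsilon>) * real (card (Pi\<^sub>E {..<k} (\<lambda>_. {..<msize n 1})))"
    using c2 card unfolding cP msize_nat by (simp add: algebra_simps)
  then show "\<exists>n>0. \<exists>f g. is_code E tle hde cap n {..<k} s {..<k} t f g \<and>
        real (card {m \<in> Pi\<^sub>E {..<k} (\<lambda>_. {..<msize n 1}).
                 \<forall>X. consistent E f (\<lambda>_. 0) X m \<longrightarrow> (\<forall>i<k. g i X m = m i)})
          \<ge> (1 - \<epsilon>) * real (card (Pi\<^sub>E {..<k} (\<lambda>_. {..<msize n 1})))"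
    using n fg by blast
qed

theorem theorem1:
  fixes E :: "'e set" and tle hde :: "'e \<Rightarrow> 'v" and cap :: "'e \<Rightarrow> real"
    and k :: nat and s t :: "nat \<Rightarrow> 'v"
  assumes "finite E"
    and "acyclic_net E tle hde"
    and "\<forall>e\<in>E. cap e \<ge> 0"
  shows "ec_feasible (G_edges E k) (G_tl tle t) (G_hd hde s) (G_cap cap) NS NT (G_adm E k) (real k)
     \<longleftrightarrow> mu_feasible E tle hde cap k s t 1"
  using dir1 dir2[OF assms(1,2)] by blast

end
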